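(* Let $0<\lambda\le 1$. If $f\in\mathcal{U}(\lambda)$, then \[-\lambda(2+\lambda)\le \det T_{2,1}(f)\le 1.\] If moreover $f\in\mathcal{U}_s(\lambda)$, then \[-\lambda^2\le \det T_{3,1}(f)\le \begin{cases}1, & 0<\lambda\le\lambda_0,\\ \lambda^2(1+\lambda)(3+\lambda), & \lambda_0\le\lambda\le 1,\end{cases}\] where $\lambda_0=0.44762\ldots$ is the positive real root of $\lambda^2(1+\lambda)(3+\lambda)-1=0$. All inequalities are sharp.
   Context: $\mathbb{D}=\{z\in\mathbb{C}:|z|<1\}$. $\mathcal{A}$ is the class of analytic functions $f$ on $\mathbb{D}$ with $f(0)=0$, $f'(0)=1$, written $f(z)=z+a_2z^2+a_3z^3+\cdots$. For $0<\lambda\le1$, $\mathcal{U}(\lambda)=\{f\in\mathcal{A}: |(z/f(z))^2f'(z)-1|<\lambda \text{ for all } z\in\mathbb{D}\}$, and $\mathcal{U}_s(\lambda)=\{f\in\mathcal{U}(\lambda): \frac{f(z)}{z}\prec\frac{1}{(1+z)(1+\lambda z)}\}$, where $g\prec h$ (subordination) means $g=h\circ\omega$ for some analytic $\omega:\mathbb{D}\to\mathbb{D}$ with $\omega(0)=0$. For $f\in\mathcal{A}$, $\det T_{2,1}(f)=1-|a_2|^2$ and $\det T_{3,1}(f)=2\,\mathrm{Re}(a_2^2\overline{a_3})-2|a_2|^2-|a_3|^2+1$ are the determinants of the Hermitian Toeplitz matrices $\begin{pmatrix}1&a_2\\ \overline{a_2}&1\end{pmatrix}$ and $\begin{pmatrix}1&a_2&a_3\\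 \overline{a_2}&1&a_2\\ \overline{a_3}&\overline{a_2}&1\end{pmatrix}$ (real numbers, possibly negative). *)

theory Defs
  imports "HOL-Analysis.Analysis"
begin

definition classA :: "(complex \<Rightarrow> complex) set" where
  "classA = {f. f holomorphic_on ball 0 1 \<and> f 0 = 0 \<and> deriv f 0 = 1}"

definition coeff :: "(complex \<Rightarrow> complex) \<Rightarrow> nat \<Rightarrow> complex" where
  "coeff f n = (deriv ^^ n) f 0 / of_nat (fact n)"

text \<open>U(lambda). At z = 0 the expression (z/f z)^2 f'(z) equals 1 by continuity,
  so the condition is vacuous there; it is imposed on the punctured disc.\<close>
definition classU :: "real \<Rightarrow> (complex \<Rightarrow> complex) set" where
  "classU lam = {f \<in> classA. \<forall>z \<in> ball 0 1 - {0}.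
      cmod ((z / f z)^2 * deriv f z - 1) < lam}"

definition subordinate :: "(complex \<Rightarrow> complex) \<Rightarrow> (complex \<Rightarrow> complex) \<Rightarrow> bool" where
  "subordinate g h \<longleftrightarrow> (\<exists>\<omega>. \<omega> holomorphic_on ball 0 1 \<and> \<omega> ` ball 0 1 \<subseteq> ball 0 1
      \<and> \<omega> 0 = 0 \<and> (\<forall>z \<in> ball 0 1. g z = h (\<omega> z)))"

text \<open>U_s(lambda); f(z)/z is taken with its removable value 1 at z = 0.\<close>
definition classUs :: "real \<Rightarrow> (complex \<Rightarrow> complex) set" where
  "classUs lam = {f \<in> classU lam.
      subordinate (\<lambda>z. if z = 0 then 1 else f z / z)
                  (\<lambda>z. 1 / ((1 + z) * (1 + complex_of_real lam * z)))}"

definition detT21 :: "(complex \<Rightarrow> complex) \<Rightarrow> real" where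
  "detT21 f = 1 - (cmod (coeff f 2))^2"

definition detT31 :: "(complex \<Rightarrow> complex) \<Rightarrow> real" where
  "detT31 f = 2 * Re ((coeff f 2)^2 * cnj (coeff f 3)) - 2 * (cmod (coeff f 2))^2
              - (cmod (coeff f 3))^2 + 1"

definition lambda0 :: real where
  "lambda0 = (THE l. l > 0 \<and> l^2 * (1 + l) * (3 + l) - 1 = 0)"

end

theory Submission
  imports Defs "HOL-Complex_Analysis.Complex_Analysis"
begin


lemma higher_deriv_zmult:
  assumes "G holomorphic_on ball 0 1"
  shows "(deriv ^^ Suc n) (\<lambda>z. z * G z) 0 = of_nat (Suc n) * (deriv ^^ n) G 0"
proof -
  have "(deriv ^^ Suc n) (\<lambda>z. z * G z) 0 =
     (\<Sum>i = 0..Suc n. of_nat (Suc n choose i) * (deriv ^^ i) (\<lambda>w. w) 0 * (deriv ^^ (Suc n - i)) G 0)"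
    by (rule higher_deriv_mult) (auto intro: holomorphic_intros assms)
  also have "\<dots> = (\<Sum>i = 0..Suc n. if i = 1 then of_nat (Suc n) * (deriv ^^ n) G 0 else 0)"
    by (rule sum.cong) auto
  also have "\<dots> = of_nat (Suc n) * (deriv ^^ n) G 0"
    by (simp add: sum.delta)
  finally show ?thesis .
qed

lemma coeff_zmult:
  assumes "G holomorphic_on ball 0 1"
  shows "coeff (\<lambda>z. z * G z) (Suc n) = (deriv ^^ n) G 0 / fact n"
proof -
  have "of_nat (fact (Suc n)) = (of_nat (Suc n) * of_nat (fact n) :: complex)"
    by (metis fact_Suc of_nat_id of_nat_mult)
  moreover have "(of_nat (fact n) :: complex) \<noteq> 0" by simp
  ultimately show ?thesis
    unfolding coeff_def higher_deriv_zmult[OF assms]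
    by (simp del: of_nat_Suc)
qed

lemma deriv_inv_quad:
  fixes \<alpha> \<beta> :: complex
  defines "G \<equiv> \<lambda>z. 1 / (1 + \<alpha> * z + \<beta> * z^2)"
  shows "deriv G 0 = - \<alpha>" and "deriv (deriv G) 0 = 2 * (\<alpha>^2 - \<beta>)"
proof -
  define S where "S = {z. 1 + \<alpha> * z + \<beta> * z^2 \<noteq> 0}"
  have oS: "open S" unfolding S_def
    by (rule open_Collect_neq) (auto intro!: continuous_intros)
  have S0: "0 \<in> S" by (simp add: S_def)
  have D: "(G has_field_derivative -(\<alpha> + 2*\<beta>*z) / (1 + \<alpha> * z + \<beta> * z^2)^2) (at z)"
    if "z \<in> S" for z
    using that unfolding G_def S_def
    by (auto intro!: derivative_eq_intros simp: field_simps power2_eq_square)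
  show "deriv G 0 = - \<alpha>" using DERIV_imp_deriv[OF D[OF S0]] by simp
  have ev: "eventually (\<lambda>z. deriv G z = -(\<alpha> + 2*\<beta>*z) / (1 + \<alpha> * z + \<beta> * z^2)^2) (nhds 0)"
    using eventually_nhds_in_open[OF oS S0] by eventually_elim (use D DERIV_imp_deriv in blast)
  have "deriv (deriv G) 0 = deriv (\<lambda>z. -(\<alpha> + 2*\<beta>*z) / (1 + \<alpha> * z + \<beta> * z^2)^2) 0"
    by (rule deriv_cong_ev[OF ev refl])
  also have "\<dots> = 2 * (\<alpha>^2 - \<beta>)"
    by (rule DERIV_imp_deriv) (auto intro!: derivative_eq_intros simp: field_simps power2_eq_square)
  finally show "deriv (deriv G) 0 = 2 * (\<alpha>^2 - \<beta>)" .
qed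



lemma norm_bound_at0:
  fixes h :: "complex \<Rightarrow> complex"
  assumes "continuous_on (ball 0 1) h" "\<And>z. z \<in> ball 0 1 \<Longrightarrow> z \<noteq> 0 \<Longrightarrow> norm (h z) \<le> c"
  shows "norm (h 0) \<le> c"
proof -
  have "isCont h 0" using assms(1) by (rule continuous_on_interior) auto
  then have "((\<lambda>z. norm (h z)) \<longlongrightarrow> norm (h 0)) (at 0)"
    by (intro tendsto_norm) (simp add: isCont_def)
  moreover have "eventually (\<lambda>z. norm (h z) \<le> c) (at 0)"
    unfolding eventually_at by (rule exI[of _ 1]) (auto intro: assms(2) simp: dist_norm)
  ultimately show ?thesis
    by (rule tendsto_upperbound) simp
qed

lemma le_of_all_r:
  fixes x lam :: real
  assumes "\<And>r. 0 < r \<Longrightarrow> r < 1 \<Longrightarrow> x \<le> lam / r^2" "0 \<le> lam"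
  shows "x \<le> lam"
proof (rule ccontr)
  assume "\<not> x \<le> lam"
  then have xl: "lam < x" by simp
  then have x0: "0 < x" using assms(2) by simp
  define r where "r = sqrt ((1 + lam / x) / 2)"
  have q: "lam / x < 1" using xl x0 by simp
  have "0 \<le> lam / x" using assms(2) x0 by simp
  then have r2: "r^2 = (1 + lam / x) / 2" unfolding r_def by simp
  have "0 < r" unfolding r_def using \<open>0 \<le> lam / x\<close> by simp
  moreover have "r < 1"
  proof -
    have "sqrt ((1 + lam / x) / 2) < sqrt 1" by (rule real_sqrt_less_mono) (use q in simp)
    then show ?thesis unfolding r_def by simp
  qed
  ultimately have "x \<le> lam / r^2" by (rule assms(1))
  moreover have "lam / r^2 < x"
  proof -
    have "lam * 2 < lam + x" using xl by simp
    then have "lam * 2 * x < (lam + x) * x" using x0 by (rule mult_strict_right_mono)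
    moreover have "lam / r^2 = lam * 2 * x / (lam + x)" unfolding r2 using x0 xl assms(2)
      by (simp add: field_simps)
    moreover have "0 < lam + x" using x0 assms(2) by simp
    ultimately show ?thesis by (simp add: divide_less_eq mult.commute)
  qed
  ultimately show False by simp
qed



lemma classU_facts:
  assumes f: "f \<in> classU lam" and lam: "0 < lam" "lam \<le> 1"
  shows "cmod (coeff f 3 - (coeff f 2)^2) \<le> lam" and "cmod (coeff f 2) \<le> 1 + lam"
proof -
  let ?B = "ball (0::complex) 1"
  from f have hol: "f holomorphic_on ?B" and f0: "f 0 = 0" and df0: "deriv f 0 = 1"
    and cond: "\<And>z. z \<in> ?B \<Longrightarrow> z \<noteq> 0 \<Longrightarrow> cmod ((z / f z)^2 * deriv f z - 1) < lam"
    by (auto simp: classU_def classA_def)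
  define F where "F = (\<lambda>z. if z = 0 then 1 else f z / z)"
  have holF: "F holomorphic_on ?B"
  proof -
    have "(\<lambda>z. if z = 0 then deriv f 0 else (f z - f 0) / (z - 0)) holomorphic_on ?B"
      by (rule pole_lemma[OF hol]) auto
    also have "(\<lambda>z. if z = 0 then deriv f 0 else (f z - f 0) / (z - 0)) = F"
      by (auto simp: F_def f0 df0 fun_eq_iff)
    finally show ?thesis .
  qed
  have fF: "f = (\<lambda>z. z * F z)" by (auto simp: F_def f0 fun_eq_iff)
  have F0: "F 0 = 1" by (simp add: F_def)
  have Fnz: "F z \<noteq> 0" if "z \<in> ?B" for z
  proof (cases "z = 0")
    case False
    have "f z \<noteq> 0"
    proof
      assume "f z = 0"
      then have "cmod ((z / f z)^2 * deriv f z - 1) = 1" by simp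
      with cond[OF that False] lam show False by simp
    qed
    then show ?thesis using False by (simp add: F_def)
  qed (simp add: F_def)
  have a2: "coeff f 2 = deriv F 0"
    using coeff_zmult[OF holF, of 1] fF by (simp add: numeral_2_eq_2)
  have a3: "coeff f 3 = deriv (deriv F) 0 / 2"
    using coeff_zmult[OF holF, of 2] fF by (simp add: numeral_3_eq_3 numeral_2_eq_2)
  have dF: "(F has_field_derivative deriv F z) (at z)" if "z \<in> ?B" for z
    by (rule holomorphic_derivI[OF holF _ that]) auto
  have holdF: "deriv F holomorphic_on ?B" by (rule holomorphic_deriv[OF holF]) auto
  have ddF: "(deriv F has_field_derivative deriv (deriv F) z) (at z)" if "z \<in> ?B" for z
    by (rule holomorphic_derivI[OF holdF _ that]) auto
  define g where "g = (\<lambda>z. 1 / F z)"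
  have holg: "g holomorphic_on ?B" unfolding g_def
    by (intro holomorphic_intros holF) (use Fnz in auto)
  have holdg: "deriv g holomorphic_on ?B" by (rule holomorphic_deriv[OF holg]) auto
  have holddg: "deriv (deriv g) holomorphic_on ?B" by (rule holomorphic_deriv[OF holdg]) auto
  have dgB: "(g has_field_derivative deriv g z) (at z)" if "z \<in> ?B" for z
    by (rule holomorphic_derivI[OF holg _ that]) auto
  have ddgB: "(deriv g has_field_derivative deriv (deriv g) z) (at z)" if "z \<in> ?B" for z
    by (rule holomorphic_derivI[OF holdg _ that]) auto
  have dddgB: "(deriv (deriv g) has_field_derivative deriv (deriv (deriv g)) z) (at z)" if "z \<in> ?B" for z
    by (rule holomorphic_derivI[OF holddg _ that]) auto
  have dg: "deriv g z = - deriv F z / (F z)^2" if "z \<in> ?B" for z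
  proof -
    have "(g has_field_derivative - deriv F z / (F z)^2) (at z)"
      unfolding g_def using dF[OF that] Fnz[OF that]
      by (auto intro!: derivative_eq_intros simp: field_simps power2_eq_square)
    then show ?thesis by (rule DERIV_imp_deriv)
  qed
  have g0: "g 0 = 1" by (simp add: g_def F0)
  have dg0: "deriv g 0 = - coeff f 2" using dg[of 0] by (simp add: F0 a2)
  have ev: "eventually (\<lambda>z. z \<in> ?B) (nhds 0)"
    by (rule eventually_nhds_in_open) auto
  have ddg0: "deriv (deriv g) 0 = 2 * (coeff f 2)^2 - 2 * coeff f 3"
  proof -
    have "deriv (deriv g) 0 = deriv (\<lambda>z. - deriv F z / (F z)^2) 0"
      by (rule deriv_cong_ev[OF _ refl]) (use ev in eventually_elim, use dg in auto)
    also have "\<dots> = - deriv (deriv F) 0 + 2 * (deriv F 0)^2"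
      by (rule DERIV_imp_deriv)
        (use dF[of 0] ddF[of 0] in \<open>auto intro!: derivative_eq_intros simp: F0 field_simps power2_eq_square\<close>)
    finally show ?thesis by (simp add: a2 a3)
  qed
  define W where "W = (\<lambda>z. g z - z * deriv g z - 1)"
  have holW: "W holomorphic_on ?B" unfolding W_def
    by (intro holomorphic_intros holg holdg)
  have dWB: "(W has_field_derivative - z * deriv (deriv g) z) (at z)" if "z \<in> ?B" for z
    unfolding W_def using dgB[OF that] ddgB[OF that]
    by (auto intro!: derivative_eq_intros)
  have W0: "W 0 = 0" by (simp add: W_def g0)
  have dW0: "deriv W 0 = 0" using DERIV_imp_deriv[OF dWB[of 0]] by simp
  have Wcond: "cmod (W z) < lam" if "z \<in> ?B" for z
  proof (cases "z = 0")
    case True then show ?thesis using W0 lam by simp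
  next
    case False
    have "(f has_field_derivative F z + z * deriv F z) (at z)"
      unfolding fF using dF[OF that] by (auto intro!: derivative_eq_intros)
    then have dfz: "deriv f z = F z + z * deriv F z" by (rule DERIV_imp_deriv)
    have fz: "f z = z * F z" using fF by (rule fun_cong)
    have "W z = 1 / F z + z * deriv F z / (F z)^2 - 1"
      unfolding W_def dg[OF that] by (simp add: g_def)
    also have "\<dots> = (z / f z)^2 * deriv f z - 1"
      unfolding dfz fz using Fnz[OF that] False
      by (simp add: field_simps power2_eq_square)
    finally have "W z = (z / f z)^2 * deriv f z - 1" .
    then show ?thesis using cond[OF that False] by simp
  qed
  have ddW0: "deriv (deriv W) 0 = - deriv (deriv g) 0"
  proof -
    have "deriv (deriv W) 0 = deriv (\<lambda>z. - z * deriv (deriv g) z) 0"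
      by (rule deriv_cong_ev[OF _ refl]) (use ev in eventually_elim, use dWB DERIV_imp_deriv in auto)
    also have "\<dots> = - deriv (deriv g) 0"
      by (rule DERIV_imp_deriv) (use dddgB[of 0] in \<open>auto intro!: derivative_eq_intros\<close>)
    finally show ?thesis .
  qed
  have "cmod (deriv (deriv W) 0) \<le> 2 * lam"
  proof -
    have "cmod (deriv (deriv W) 0) / 2 \<le> lam / r^2" if "0 < r" "r < 1" for r
    proof -
      have sub: "cball 0 r \<subseteq> ?B" using that by auto
      have "cmod ((deriv ^^ 2) W 0) \<le> fact 2 * lam / r^2"
      proof (rule Cauchy_higher_deriv_bound)
        show "W holomorphic_on ball 0 r" using holW sub by (meson ball_subset_cball holomorphic_on_subset subset_trans)
        show "continuous_on (cball 0 r) W"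
          using holomorphic_on_imp_continuous_on[OF holW] sub by (rule continuous_on_subset)
        show "W w \<in> ball 0 lam" if "w \<in> ball 0 r" for w
          using Wcond[of w] that \<open>r < 1\<close> by (auto simp: dist_norm)
      qed (use that in auto)
      then show ?thesis by (simp add: numeral_2_eq_2 ac_simps)
    qed
    then have "cmod (deriv (deriv W) 0) / 2 \<le> lam" by (rule le_of_all_r) (use lam in auto)
    then show ?thesis by simp
  qed
  moreover have "deriv (deriv W) 0 = - (2 * ((coeff f 2)^2 - coeff f 3))"
    by (simp add: ddW0 ddg0 right_diff_distrib)
  ultimately have "cmod (2 * ((coeff f 2)^2 - coeff f 3)) \<le> 2 * lam"
    by (metis norm_minus_cancel)
  then have "cmod ((coeff f 2)^2 - coeff f 3) \<le> lam" unfolding norm_mult by simp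
  then show "cmod (coeff f 3 - (coeff f 2)^2) \<le> lam" by (simp add: norm_minus_commute)
  show "cmod (coeff f 2) \<le> 1 + lam"
  proof -
    have Wsch: "cmod (W z) \<le> lam * cmod z" if "z \<in> ?B" for z
    proof -
      have "norm ((\<lambda>z. W z / lam) z) \<le> norm z"
      proof (rule Schwarz_Lemma(1))
        show "(\<lambda>z. W z / lam) holomorphic_on ?B" by (intro holomorphic_intros holW) (use lam in auto)
        show "W 0 / lam = 0" by (simp add: W0)
        show "norm (W z / lam) < 1" if "norm z < 1" for z
          using Wcond[of z] that lam by (simp add: norm_divide)
      qed (use that in auto)
      then show ?thesis using lam by (simp add: norm_divide field_simps)
    qed
    define W2 where "W2 = (\<lambda>z. if z = 0 then deriv W 0 else (W z - W 0) / (z - 0))"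
    have holW2: "W2 holomorphic_on ?B" unfolding W2_def
      by (rule pole_lemma[OF holW]) auto
    have W20: "W2 0 = 0" by (simp add: W2_def dW0)
    have W2z: "W2 z = W z / z" if "z \<noteq> 0" for z using that by (simp add: W2_def W0)
    have W2b: "cmod (W2 z) \<le> lam" if "z \<in> ?B" for z
    proof (cases "z = 0")
      case True then show ?thesis using lam by (simp add: W20)
    next
      case False
      then show ?thesis using Wsch[OF that] by (simp add: W2z norm_divide field_simps)
    qed
    have W2s: "cmod (W2 z) \<le> lam * cmod z" if "z \<in> ?B" for z
    proof (rule field_le_epsilon)
      fix e :: real assume e: "0 < e"
      define L where "L = lam + e"
      have L0: "0 < L" using lam e by (simp add: L_def)
      have ne: "cmod (of_real L) = L" using L0 by simp
      have "norm ((\<lambda>z. W2 z / of_real L) z) \<le> norm z"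
      proof (rule Schwarz_Lemma(1))
        show "(\<lambda>z. W2 z / of_real L) holomorphic_on ?B" by (intro holomorphic_intros holW2) (use L0 in auto)
        show "W2 0 / of_real L = 0" by (simp add: W20)
        show "norm (W2 z / of_real L) < 1" if "norm z < 1" for z
        proof -
          have "cmod (W2 z) < L" using W2b[of z] that e by (simp add: L_def)
          then show ?thesis using L0 by (simp add: norm_divide ne divide_less_eq)
        qed
      qed (use that in auto)
      then have "cmod (W2 z) \<le> L * cmod z" using L0 by (simp add: norm_divide ne field_simps)
      then have "cmod (W2 z) \<le> (lam + e) * cmod z" by (simp add: L_def)
      also have "\<dots> \<le> lam * cmod z + e" using e that by (simp add: distrib_right mult_left_le)
      finally show "cmod (W2 z) \<le> lam * cmod z + e" .
    qed
    have Wsq: "cmod (W z) \<le> lam * (cmod z)^2" if "z \<in> ?B" for z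
    proof (cases "z = 0")
      case True then show ?thesis by (simp add: W0)
    next
      case False
      have "W z = z * W2 z" using False by (simp add: W2z)
      then have "cmod (W z) = cmod z * cmod (W2 z)" by (simp add: norm_mult)
      also have "\<dots> \<le> cmod z * (lam * cmod z)" by (rule mult_left_mono[OF W2s[OF that]]) simp
      finally show ?thesis by (simp add: power2_eq_square algebra_simps)
    qed
    define u where "u = (\<lambda>z. g z - 1 + coeff f 2 * z)"
    have holu: "u holomorphic_on ?B" unfolding u_def by (intro holomorphic_intros holg)
    have u0: "u 0 = 0" by (simp add: u_def g0)
    have duB: "(u has_field_derivative deriv g z + coeff f 2) (at z)" if "z \<in> ?B" for z
      unfolding u_def using dgB[OF that] by (auto intro!: derivative_eq_intros)
    have du0: "deriv u 0 = 0" using DERIV_imp_deriv[OF duB[of 0]] by (simp add: dg0)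
    define Q where "Q = (\<lambda>z. if z = 0 then deriv u 0 else (u z - u 0) / (z - 0))"
    have holQ: "Q holomorphic_on ?B" unfolding Q_def by (rule pole_lemma[OF holu]) auto
    have Q0: "Q 0 = 0" by (simp add: Q_def du0)
    have Qz: "Q z = u z / z" if "z \<noteq> 0" for z using that by (simp add: Q_def u0)
    have holdQ: "deriv Q holomorphic_on ?B" by (rule holomorphic_deriv[OF holQ]) auto
    have dQb: "cmod (deriv Q z) \<le> lam" if "z \<in> ?B" "z \<noteq> 0" for z
    proof -
      let ?S = "?B - {0}"
      have oS: "open ?S" by auto
      have zS: "z \<in> ?S" using that by auto
      have "deriv Q z = deriv (\<lambda>w. u w / w) z"
        by (rule deriv_cong_ev[OF _ refl])
           (use eventually_nhds_in_open[OF oS zS] in eventually_elim, auto simp: Qz)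
      also have "\<dots> = ((deriv g z + coeff f 2) * z - u z) / z^2"
        by (rule DERIV_imp_deriv) (use duB[OF that(1)] that(2) in \<open>auto intro!: derivative_eq_intros simp: field_simps power2_eq_square\<close>)
      also have "\<dots> = - W z / z^2"
        by (simp add: u_def W_def algebra_simps)
      finally have "deriv Q z = - W z / z^2" .
      then have "cmod (deriv Q z) = cmod (W z) / (cmod z)^2" by (simp add: norm_divide norm_power)
      also have "\<dots> \<le> lam" using Wsq[OF that(1)] that(2) by (simp add: field_simps)
      finally show ?thesis .
    qed
    have dQ0: "cmod (deriv Q 0) \<le> lam"
      by (rule norm_bound_at0[OF holomorphic_on_imp_continuous_on[OF holdQ]]) (use dQb in auto)
    have dQall: "cmod (deriv Q z) \<le> lam" if "z \<in> ?B" for z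
      using dQ0 dQb[OF that] by (cases "z = 0") auto
    have Qb: "cmod (Q z) \<le> lam * cmod z" if "z \<in> ?B" for z
    proof -
      have "norm (Q z - Q 0) \<le> lam * norm (z - 0)"
      proof (rule field_differentiable_bound[of ?B])
        show "(Q has_field_derivative deriv Q x) (at x within ?B)" if "x \<in> ?B" for x
          by (rule holomorphic_derivI[OF holQ _ that]) auto
      qed (use dQall that in auto)
      then show ?thesis by (simp add: Q0)
    qed
    have ub: "cmod (u z) \<le> lam * (cmod z)^2" if "z \<in> ?B" for z
    proof (cases "z = 0")
      case True then show ?thesis by (simp add: u0)
    next
      case False
      have "u z = z * Q z" using False by (simp add: Qz)
      then have "cmod (u z) = cmod z * cmod (Q z)" by (simp add: norm_mult)
      also have "\<dots> \<le> cmod z * (lam * cmod z)" by (rule mult_left_mono[OF Qb[OF that]]) simp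
      finally show ?thesis by (simp add: power2_eq_square algebra_simps)
    qed
    show ?thesis
    proof (rule ccontr)
      assume "\<not> cmod (coeff f 2) \<le> 1 + lam"
      then have big: "1 + lam < cmod (coeff f 2)" by simp
      define A where "A = cmod (coeff f 2)"
      define d where "d = A - 1 - lam"
      have d0: "0 < d" using big by (simp add: d_def A_def)
      have A0: "0 < A" unfolding A_def using big lam by linarith
      define r where "r = 1 - d / (2 * A)"
      have dA: "d / (2 * A) < 1/2" using d0 A0 lam by (simp add: d_def field_simps)
      have r0: "0 < r" and r1: "r < 1" using dA d0 A0 by (auto simp: r_def)
      have key: "1 + lam * r^2 \<le> A * r"
      proof -
        have "lam * r^2 \<le> lam" using r0 r1 lam by (simp add: power_le_one)
        moreover have "A * r = A - d / 2" using A0 by (simp add: r_def field_simps)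
        ultimately show ?thesis using d0 unfolding d_def by argo
      qed
      have a2nz: "coeff f 2 \<noteq> 0"
      proof
        assume "coeff f 2 = 0"
        then show False using big lam by simp
      qed
      let ?C = "cball (0::complex) r"
      have CB: "?C \<subseteq> ?B" using r1 by auto
      define phi where "phi = (\<lambda>z. (1 + u z) / coeff f 2)"
      obtain z0 where z0C: "z0 \<in> ?C" and fix0: "phi z0 = z0"
      proof (rule brouwer[of ?C phi])
        show "continuous_on ?C phi" unfolding phi_def
          by (intro continuous_intros continuous_on_subset[OF holomorphic_on_imp_continuous_on[OF holu] CB])
            (use a2nz in auto)
        show "phi \<in> ?C \<rightarrow> ?C"
        proof
          fix z assume zC: "z \<in> ?C"
          then have zB: "z \<in> ?B" using CB by auto
          have nz: "cmod z \<le> r" using zC by auto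
          have "cmod (1 + u z) \<le> 1 + lam * (cmod z)^2"
            using norm_triangle_ineq[of 1 "u z"] ub[OF zB] by simp
          also have "\<dots> \<le> 1 + lam * r^2"
            using nz lam by (simp add: power_mono)
          also have "\<dots> \<le> A * r" by (rule key)
          finally have "cmod (1 + u z) \<le> A * r" .
          then show "phi z \<in> ?C" using A0 by (simp add: phi_def norm_divide A_def field_simps)
        qed
      qed (use r0 in auto)
      have z0B: "z0 \<in> ?B" using z0C CB by auto
      have "g z0 = 0"
      proof -
        have "(1 + u z0) = coeff f 2 * z0" using fix0 a2nz by (simp add: phi_def field_simps)
        then show ?thesis by (simp add: u_def algebra_simps)
      qed
      moreover have "g z0 \<noteq> 0" using Fnz[OF z0B] by (simp add: g_def)
      ultimately show False by simp
    qed
  qed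
qed



lemma detT31_real: fixes x1 x2 x3 x4 :: real
  shows "2*((x1^2 - x2^2)*x3 + 2*x1*x2*x4) - 2*(x1^2+x2^2) - (x3^2+x4^2) + 1 = (1 - (x1^2+x2^2))^2 - ((x3 - x1^2 + x2^2)^2 + (x4 - 2*x1*x2)^2)"
  by (simp add: power2_eq_square algebra_simps)

lemma detT31_alt:
  fixes a b :: complex
  shows "2 * Re (a^2 * cnj b) - 2 * (cmod a)^2 - (cmod b)^2 + 1
       = (1 - (cmod a)^2)^2 - (cmod (b - a^2))^2"
proof -
  have 1: "Re (a^2 * cnj b) = (Re a ^2 - Im a ^2) * Re b + 2 * Re a * Im a * Im b"
    by (simp add: power2_eq_square algebra_simps)
  have 2: "(cmod a)^2 = Re a ^2 + Im a ^2" by (simp add: cmod_power2)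
  have 3: "(cmod b)^2 = Re b ^2 + Im b ^2" by (simp add: cmod_power2)
  have 4: "(cmod (b - a^2))^2 = (Re b - Re a ^2 + Im a ^2)^2 + (Im b - 2 * Re a * Im a)^2"
    unfolding cmod_power2 by (simp add: power2_eq_square algebra_simps)
  show ?thesis unfolding 1 2 3 4 by (rule detT31_real)
qed

definition P0 :: "real \<Rightarrow> real" where "P0 l = l^2 * (1 + l) * (3 + l)"

lemma P0_strict_mono: "0 \<le> a \<Longrightarrow> a < b \<Longrightarrow> P0 a < P0 b"
proof -
  assume a: "0 \<le> a" "a < b"
  have "a^2 < b^2" using a by (simp add: power_strict_mono)
  then have "a^2 * (1 + a) < b^2 * (1 + b)"
    using a by (intro mult_strict_mono) auto
  then have "a^2 * (1 + a) * (3 + a) < b^2 * (1 + b) * (3 + b)"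
    using a \<open>a^2 < b^2\<close> by (intro mult_strict_mono) auto
  then show ?thesis by (simp add: P0_def)
qed

lemma lambda0_props: "0 < lambda0" "P0 lambda0 = 1"
proof -
  have cont: "continuous_on {0..1} P0" unfolding P0_def by (intro continuous_intros)
  have "\<exists>l. 0 \<le> l \<and> l \<le> 1 \<and> P0 l = 1"
    by (rule IVT'[OF _ _ _ cont]) (simp_all add: P0_def)
  then obtain l where l: "0 \<le> l" "P0 l = 1" by blast
  have l0: "0 < l"
  proof (rule ccontr)
    assume "\<not> 0 < l"
    then have "l = 0" using l(1) by simp
    then show False using l(2) by (simp add: P0_def)
  qed
  have uniq: "m = l" if "0 < m" "P0 m = 1" for m
  proof (rule ccontr)
    assume "m \<noteq> l"
    then consider "m < l" | "l < m" by linarith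
    then show False
    proof cases
      case 1 then show False using P0_strict_mono[of m l] that l by simp
    next
      case 2 then show False using P0_strict_mono[of l m] that l by simp
    qed
  qed
  have "(THE l. l > 0 \<and> l^2 * (1 + l) * (3 + l) - 1 = 0) = l"
  proof (rule the_equality)
    show "0 < l \<and> l^2 * (1 + l) * (3 + l) - 1 = 0" using l0 l(2) by (simp add: P0_def)
    show "m = l" if "0 < m \<and> m^2 * (1 + m) * (3 + m) - 1 = 0" for m
      using uniq[of m] that by (simp add: P0_def)
  qed
  then have "lambda0 = l" by (simp add: lambda0_def)
  then show "0 < lambda0" "P0 lambda0 = 1" using l0 l by auto
qed

lemma le_lambda0_iff:
  assumes "0 < l" shows "l \<le> lambda0 \<longleftrightarrow> P0 l \<le> 1"
proof
  assume "l \<le> lambda0"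
  then show "P0 l \<le> 1"
    using P0_strict_mono[of l lambda0] lambda0_props assms by (cases "l = lambda0") auto
next
  assume h: "P0 l \<le> 1"
  show "l \<le> lambda0"
  proof (rule ccontr)
    assume "\<not> l \<le> lambda0"
    then have "P0 lambda0 < P0 l" using P0_strict_mono[of lambda0 l] lambda0_props by simp
    then show False using h lambda0_props by simp
  qed
qed

lemma upper_real:
  fixes l s m :: real
  assumes l: "0 < l" "l \<le> 1" and s: "0 \<le> s" "s \<le> 1" and m: "0 \<le> m" "(1 + 2*l) * s - (1 + l) \<le> m"
  shows "(1 - (1 + l)^2 * s)^2 - m^2 \<le> max 1 (P0 l)"
proof -
  define K where "K = (1 + l)^2"
  have sq: "(1 - K * s)^2 = (K * s - 1)^2" by (simp add: power2_commute)
  consider "K * s \<le> 1" | "1 < K * s" "(1 + 2*l) * s \<le> 1 + l" | "1 + l \<le> (1 + 2*l) * s" by linarith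
  then have "(1 - K * s)^2 - m^2 \<le> max 1 (P0 l)"
  proof cases
    case 1
    have "0 \<le> K * s" using s by (simp add: K_def)
    then have "(1 - K * s)^2 \<le> 1" using 1 by (intro power_le_one) auto
    moreover have "0 \<le> m^2" by simp
    ultimately show ?thesis by linarith
  next
    case 2
    have a: "0 < K * s - 1" using 2 by simp
    have "(1 + 2*l) * (K * s - 1) = K * ((1 + 2*l) * s) - (1 + 2*l)" by (simp add: algebra_simps)
    also have "\<dots> \<le> K * (1 + l) - (1 + 2*l)"
      using 2 by (simp add: K_def mult_left_mono)
    also have "\<dots> = l * (1 + 3*l + l^2)" by (simp add: K_def power2_eq_square algebra_simps)
    finally have b: "(1 + 2*l) * (K * s - 1) \<le> l * (1 + 3*l + l^2)" .
    have "((1 + 2*l) * (K * s - 1))^2 \<le> (l * (1 + 3*l + l^2))^2"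
      using b a l by (intro power_mono) auto
    also have "\<dots> \<le> (1 + 2*l)^2 * P0 l"
    proof -
      have "(1 + 2*l)^2 * P0 l - (l * (1 + 3*l + l^2))^2 = l^2 * (2 + 10*l + 18*l^2 + 14*l^3 + 3*l^4)"
        by (simp add: P0_def power2_eq_square power3_eq_cube power4_eq_xxxx algebra_simps)
      also have "0 \<le> \<dots>" using l by simp
      finally show ?thesis by simp
    qed
    finally have "(1 + 2*l)^2 * (K * s - 1)^2 \<le> (1 + 2*l)^2 * P0 l" by (simp add: power_mult_distrib)
    then have "(K * s - 1)^2 \<le> P0 l" using l by (simp add: mult_le_cancel_left)
    moreover have "0 \<le> m^2" by simp
    ultimately show ?thesis unfolding sq by linarith
  next
    case 3
    define q where "q = (1 + 2*l) * s - (1 + l)"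
    have q0: "0 \<le> q" using 3 by (simp add: q_def)
    have "q^2 \<le> m^2" using q0 m by (intro power_mono) (auto simp: q_def)
    have fac: "(K * s - 1)^2 - q^2 = (l^2 * s + l) * ((K + 1 + 2*l) * s - 2 - l)"
      by (simp add: q_def K_def power2_eq_square algebra_simps)
    have f1: "0 \<le> l^2 * s + l" using l s by simp
    have f1': "l^2 * s + l \<le> l^2 + l" using l s by (simp add: mult_left_le)
    have "(l^2 * s + l) * ((K + 1 + 2*l) * s - 2 - l) \<le> P0 l"
    proof (cases "(K + 1 + 2*l) * s - 2 - l \<le> 0")
      case True
      then have "(l^2 * s + l) * ((K + 1 + 2*l) * s - 2 - l) \<le> 0"
        using f1 by (simp add: mult_nonneg_nonpos)
      moreover have "0 \<le> P0 l" using l by (simp add: P0_def)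
      ultimately show ?thesis by linarith
    next
      case False
      have g: "(K + 1 + 2*l) * s - 2 - l \<le> l^2 + 3*l"
      proof -
        have "(K + 1 + 2*l) * s \<le> K + 1 + 2*l" using s l by (simp add: K_def mult_left_le)
        then show ?thesis by (simp add: K_def power2_eq_square algebra_simps)
      qed
      have "(l^2 * s + l) * ((K + 1 + 2*l) * s - 2 - l) \<le> (l^2 + l) * (l^2 + 3*l)"
        using f1 f1' g False by (intro mult_mono) auto
      also have "\<dots> = P0 l" by (simp add: P0_def power2_eq_square algebra_simps)
      finally show ?thesis .
    qed
    then have "(K * s - 1)^2 - q^2 \<le> P0 l" using fac by simp
    then show ?thesis unfolding sq using \<open>q^2 \<le> m^2\<close> by linarith
  qed
  then show ?thesis by (simp add: K_def)
qed



lemma classA_F: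
  assumes "f \<in> classA"
  defines "F \<equiv> (\<lambda>z. if z = 0 then 1 else f z / z)"
  shows "F holomorphic_on ball 0 1" "f = (\<lambda>z. z * F z)" "F 0 = 1"
    "coeff f 2 = deriv F 0" "coeff f 3 = deriv (deriv F) 0 / 2"
proof -
  from assms have hol: "f holomorphic_on ball 0 1" and f0: "f 0 = 0" and df0: "deriv f 0 = 1"
    by (auto simp: classA_def)
  have "(\<lambda>z. if z = 0 then deriv f 0 else (f z - f 0) / (z - 0)) holomorphic_on ball 0 1"
    by (rule pole_lemma[OF hol]) auto
  also have "(\<lambda>z. if z = 0 then deriv f 0 else (f z - f 0) / (z - 0)) = F"
    by (auto simp: F_def f0 df0 fun_eq_iff)
  finally show holF: "F holomorphic_on ball 0 1" .
  show fF: "f = (\<lambda>z. z * F z)" by (auto simp: F_def f0 fun_eq_iff)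
  show "F 0 = 1" by (simp add: F_def)
  show "coeff f 2 = deriv F 0"
    using coeff_zmult[OF holF, of 1] fF by (simp add: numeral_2_eq_2)
  show "coeff f 3 = deriv (deriv F) 0 / 2"
    using coeff_zmult[OF holF, of 2] fF by (simp add: numeral_3_eq_3 numeral_2_eq_2)
qed

lemma schwarz_coeff:
  assumes holw: "w holomorphic_on ball 0 1" and wB: "w ` ball 0 1 \<subseteq> ball 0 1" and w0: "w 0 = 0"
  defines "psi \<equiv> (\<lambda>z. if z = 0 then deriv w 0 else (w z - w 0) / (z - 0))"
  shows "psi holomorphic_on ball 0 1" "w = (\<lambda>z. z * psi z)" "psi 0 = deriv w 0"
    "cmod (deriv w 0) \<le> 1" "cmod (deriv psi 0) \<le> 1 - (cmod (deriv w 0))^2"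
proof -
  let ?B = "ball (0::complex) 1"
  show holpsi: "psi holomorphic_on ?B" unfolding psi_def by (rule pole_lemma[OF holw]) auto
  show wpsi: "w = (\<lambda>z. z * psi z)" by (auto simp: psi_def w0 fun_eq_iff)
  show psi0: "psi 0 = deriv w 0" by (simp add: psi_def)
  have no: "norm (w z) < 1" if "norm z < 1" for z
  proof -
    have "w z \<in> ball 0 1" using wB that by (auto simp: image_subset_iff)
    then show ?thesis by simp
  qed
  note S = Schwarz_Lemma[OF holw w0 no]
  show c1: "cmod (deriv w 0) \<le> 1" using S(2)[of 0] by simp
  define c1 where "c1 = deriv w 0"
  have ev: "eventually (\<lambda>z. z \<in> ?B) (nhds 0)" by (rule eventually_nhds_in_open) auto
  have lin: "psi z = a" if "z \<in> ?B" and a: "\<forall>z. norm z < 1 \<longrightarrow> w z = a * z" for z a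
  proof -
    have "deriv w 0 = deriv (\<lambda>z. a * z) 0"
      by (rule deriv_cong_ev[OF _ refl]) (use ev in eventually_elim, use a in auto)
    then have "deriv w 0 = a" by simp
    then show ?thesis using a that by (auto simp: psi_def)
  qed
  show "cmod (deriv psi 0) \<le> 1 - (cmod (deriv w 0))^2"
  proof (cases "cmod c1 = 1")
    case True
    then obtain a where a: "\<forall>z. norm z < 1 \<longrightarrow> w z = a * z" "norm a = 1"
      using S(3) by (auto simp: c1_def)
    have "deriv psi 0 = deriv (\<lambda>z. a) 0"
      by (rule deriv_cong_ev[OF _ refl]) (use ev in eventually_elim, use lin a in auto)
    then show ?thesis using True by (simp add: c1_def)
  next
    case False
    then have c1l: "cmod c1 < 1" using c1 by (simp add: c1_def)
    have psil: "cmod (psi z) < 1" if "z \<in> ?B" for z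
    proof (cases "z = 0")
      case True then show ?thesis using c1l by (simp add: psi0 c1_def)
    next
      case False
      have "cmod (w z) \<le> cmod z" using S(1)[of z] that by auto
      moreover have "w z = z * psi z" using wpsi by (simp add: fun_eq_iff)
      ultimately have "cmod z * cmod (psi z) \<le> cmod z * 1" by (simp add: norm_mult)
      then have le: "cmod (psi z) \<le> 1" by (rule mult_left_le_imp_le) (use False in simp)
      show ?thesis
      proof (rule ccontr)
        assume "\<not> cmod (psi z) < 1"
        then have "cmod (psi z) = 1" using le by simp
        then have wz: "norm (w z) = norm z" by (subst wpsi) (simp add: norm_mult)
        have "\<exists>a. (\<forall>z. norm z < 1 \<longrightarrow> w z = a * z) \<and> norm a = 1"
          by (rule S(3)[of 0]) (use that False wz in auto)
        then obtain a where a: "\<forall>z. norm z < 1 \<longrightarrow> w z = a * z" "norm a = 1" by blast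
        have "psi 0 = a" using lin[OF _ a(1)] by simp
        then show False using c1l a(2) by (simp add: psi0 c1_def)
      qed
    qed
    define chi where "chi = (\<lambda>z. (psi z - c1) / (1 - cnj c1 * psi z))"
    have den: "1 - cnj c1 * psi z \<noteq> 0" if "z \<in> ?B" for z
    proof
      assume "1 - cnj c1 * psi z = 0"
      then have "cnj c1 * psi z = 1" by simp
      then have "cmod c1 * cmod (psi z) = 1" by (metis complex_mod_cnj norm_mult norm_one)
      moreover have "cmod c1 * cmod (psi z) < 1"
        using mult_strict_mono'[OF c1l psil[OF that]] by simp
      ultimately show False by simp
    qed
    have holchi: "chi holomorphic_on ?B" unfolding chi_def
      by (intro holomorphic_intros holpsi) (use den in auto)
    have chi0: "chi 0 = 0" by (simp add: chi_def psi0 c1_def)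
    have chil: "norm (chi z) < 1" if "norm z < 1" for z
    proof -
      have "norm (Moebius_function 0 c1 (psi z)) < 1"
        by (rule Moebius_function_norm_lt_1) (use c1l psil that in auto)
      then show ?thesis by (simp add: Moebius_function_simple chi_def)
    qed
    have "norm (deriv chi 0) \<le> 1" using Schwarz_Lemma(2)[OF holchi chi0 chil, of 0] by simp
    moreover have dpsi: "(psi has_field_derivative deriv psi 0) (at 0)"
      by (rule holomorphic_derivI[OF holpsi]) auto
    have nz: "1 - cnj c1 * c1 \<noteq> 0" using den[of 0] by (simp add: psi0 c1_def)
    have "deriv chi 0 = deriv psi 0 / (1 - cnj c1 * c1)"
      by (rule DERIV_imp_deriv)
        (use dpsi nz in \<open>auto intro!: derivative_eq_intros simp: chi_def psi0 c1_def[symmetric]\<close>)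
    moreover have "cnj c1 * c1 = of_real ((cmod c1)^2)" by (simp add: complex_norm_square mult.commute del: of_real_power)
    ultimately have q: "cmod (deriv psi 0) / cmod (1 - of_real ((cmod c1)^2)) \<le> 1"
      by (simp add: norm_divide del: of_real_power)
    have N: "cmod (1 - of_real ((cmod c1)^2)) = 1 - (cmod c1)^2"
    proof -
      have "(cmod c1)^2 < 1" using c1l by (simp add: power_less_one_iff abs_square_less_1)
      then show ?thesis by (metis abs_of_pos diff_gt_0_iff_gt norm_of_real of_real_1 of_real_diff)
    qed
    have pos: "0 < 1 - (cmod c1)^2" using c1l by (simp add: abs_square_less_1)
    have q2: "cmod (deriv psi 0) / (1 - (cmod c1)^2) \<le> 1" using q by (simp only: N)
    have "cmod (deriv psi 0) \<le> 1 - (cmod c1)^2" using q2 divide_le_eq_1_pos[OF pos] by simp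
    then show ?thesis by (simp add: c1_def)
  qed
qed



lemma sub_coeffs:
  fixes F h w :: "complex \<Rightarrow> complex"
  assumes holF: "F holomorphic_on ball 0 1" and holh: "h holomorphic_on ball 0 1"
    and holw: "w holomorphic_on ball 0 1" and wB: "w ` ball 0 1 \<subseteq> ball 0 1" and w0: "w 0 = 0"
    and FB: "\<And>z. z \<in> ball 0 1 \<Longrightarrow> F z = h (w z)"
  shows "deriv F 0 = deriv h 0 * deriv w 0"
    "deriv (deriv F) 0 = deriv (deriv h) 0 * (deriv w 0)^2 + deriv h 0 * deriv (deriv w) 0"
proof -
  let ?B = "ball (0::complex) 1"
  have wzB: "w z \<in> ?B" if "z \<in> ?B" for z using wB that by (auto simp: image_subset_iff)
  have holdh: "deriv h holomorphic_on ?B" by (rule holomorphic_deriv[OF holh]) auto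
  have holdw: "deriv w holomorphic_on ?B" by (rule holomorphic_deriv[OF holw]) auto
  have dF: "deriv F z = deriv h (w z) * deriv w z" if "z \<in> ?B" for z
  proof -
    have "deriv F z = deriv (h \<circ> w) z"
      by (rule deriv_cong_ev[OF _ refl])
         (use eventually_nhds_in_open[of ?B z] that in \<open>auto elim!: eventually_mono simp: FB\<close>)
    also have "\<dots> = deriv h (w z) * deriv w z"
    proof (rule DERIV_imp_deriv, rule DERIV_chain)
      show "(h has_field_derivative deriv h (w z)) (at (w z))"
        by (rule holomorphic_derivI[OF holh _ wzB[OF that]]) auto
      show "(w has_field_derivative deriv w z) (at z)"
        by (rule holomorphic_derivI[OF holw _ that]) auto
    qed
    finally show ?thesis .
  qed
  show "deriv F 0 = deriv h 0 * deriv w 0" using dF[of 0] w0 by simp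
  have "deriv (deriv F) 0 = deriv (\<lambda>z. (deriv h \<circ> w) z * deriv w z) 0"
    by (rule deriv_cong_ev[OF _ refl])
       (use eventually_nhds_in_open[of ?B 0] in \<open>auto elim!: eventually_mono simp: dF\<close>)
  also have "\<dots> = deriv (deriv h) 0 * deriv w 0 * deriv w 0 + deriv h 0 * deriv (deriv w) 0"
  proof (rule DERIV_imp_deriv)
    have d1: "((deriv h \<circ> w) has_field_derivative deriv (deriv h) (w 0) * deriv w 0) (at 0)"
    proof (rule DERIV_chain)
      show "(deriv h has_field_derivative deriv (deriv h) (w 0)) (at (w 0))"
        by (rule holomorphic_derivI[OF holdh]) (auto simp: w0)
      show "(w has_field_derivative deriv w 0) (at 0)"
        by (rule holomorphic_derivI[OF holw]) auto
    qed
    have d2: "(deriv w has_field_derivative deriv (deriv w) 0) (at 0)"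
      by (rule holomorphic_derivI[OF holdw]) auto
    show "((\<lambda>z. (deriv h \<circ> w) z * deriv w z) has_field_derivative
        deriv (deriv h) 0 * deriv w 0 * deriv w 0 + deriv h 0 * deriv (deriv w) 0) (at 0)"
      using DERIV_mult[OF d1 d2] by (simp add: w0 algebra_simps)
  qed
  finally show "deriv (deriv F) 0 = deriv (deriv h) 0 * (deriv w 0)^2 + deriv h 0 * deriv (deriv w) 0"
    by (simp add: power2_eq_square)
qed

lemma classUs_coeffs:
  assumes f: "f \<in> classUs lam" and lam: "0 < lam" "lam \<le> 1"
  shows "\<exists>c1 c2. cmod c1 \<le> 1 \<and> cmod c2 \<le> 1 - (cmod c1)^2 \<and>
     coeff f 2 = - (1 + of_real lam) * c1 \<and>
     coeff f 3 = (1 + of_real lam + (of_real lam)^2) * c1^2 - (1 + of_real lam) * c2"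
proof -
  let ?B = "ball (0::complex) 1"
  let ?l = "complex_of_real lam"
  define F where "F = (\<lambda>z. if z = 0 then 1 else f z / z)"
  define h where "h = (\<lambda>z. 1 / ((1 + z) * (1 + ?l * z)))"
  have fU: "f \<in> classU lam" and sub: "subordinate F h"
    using f by (auto simp: classUs_def F_def h_def)
  have fA: "f \<in> classA" using fU by (simp add: classU_def)
  note FA = classA_F[OF fA, folded F_def]
  from sub obtain w where holw: "w holomorphic_on ?B" and wB: "w ` ?B \<subseteq> ?B" and w0: "w 0 = 0"
    and FB: "\<And>z. z \<in> ?B \<Longrightarrow> F z = h (w z)"
    unfolding subordinate_def by blast
  have hq: "h = (\<lambda>z. 1 / (1 + (1 + ?l) * z + ?l * z^2))"
    by (auto simp: h_def fun_eq_iff power2_eq_square algebra_simps)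
  have hnz: "(1 + z) * (1 + ?l * z) \<noteq> 0" if "z \<in> ?B" for z
  proof -
    have "cmod z < 1" using that by simp
    then have "1 + z \<noteq> 0" by (metis add.inverse_unique norm_minus_cancel norm_one not_less_iff_gr_or_eq)
    moreover have "1 + ?l * z \<noteq> 0"
    proof
      assume "1 + ?l * z = 0"
      then have "cmod (?l * z) = 1" by (metis add.inverse_unique norm_minus_cancel norm_one)
      moreover have "cmod (?l * z) < 1"
      proof -
        have "lam * cmod z < 1 * 1"
          by (rule mult_le_less_imp_less) (use \<open>cmod z < 1\<close> lam in auto)
        then show ?thesis using lam by (simp add: norm_mult)
      qed
      ultimately show False by simp
    qed
    ultimately show ?thesis by simp
  qed
  have holh: "h holomorphic_on ?B" unfolding h_def
    by (intro holomorphic_intros) (use hnz in auto)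
  have dh: "deriv h 0 = - (1 + ?l)" "deriv (deriv h) 0 = 2 * ((1 + ?l)^2 - ?l)"
    unfolding hq by (rule deriv_inv_quad)+
  note SC = schwarz_coeff[OF holw wB w0]
  define psi where "psi = (\<lambda>z. if z = 0 then deriv w 0 else (w z - w 0) / (z - 0))"
  have holpsi: "psi holomorphic_on ?B" unfolding psi_def by (fact SC(1))
  have wpsi: "w = (\<lambda>z. z * psi z)" unfolding psi_def by (fact SC(2))
  have SC5: "cmod (deriv psi 0) \<le> 1 - (cmod (deriv w 0))^2" unfolding psi_def by (fact SC(5))
  have dw1: "deriv (deriv w) 0 = 2 * deriv psi 0"
    using higher_deriv_zmult[OF holpsi, of 1] wpsi by (simp add: numeral_2_eq_2)
  note SUB = sub_coeffs[OF FA(1) holh holw wB w0 FB]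
  define c1 where "c1 = deriv w 0"
  define c2 where "c2 = deriv psi 0"
  show ?thesis
  proof (intro exI conjI)
    show "cmod c1 \<le> 1" using SC(4) by (simp add: c1_def)
    show "cmod c2 \<le> 1 - (cmod c1)^2" using SC5 by (simp add: c1_def c2_def)
    show "coeff f 2 = - (1 + ?l) * c1" using FA(4) SUB(1) dh by (simp add: c1_def)
    show "coeff f 3 = (1 + ?l + ?l^2) * c1^2 - (1 + ?l) * c2"
    proof -
      have "2 * coeff f 3 = deriv (deriv F) 0" using FA(5) by (simp add: mult.commute)
      also have "\<dots> = 2 * ((1 + ?l)^2 - ?l) * c1^2 + (- (1 + ?l)) * (2 * c2)"
        using SUB(2) dh dw1 by (simp add: c1_def c2_def)
      also have "\<dots> = 2 * ((1 + ?l + ?l^2) * c1^2 - (1 + ?l) * c2)"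
        by (simp add: power2_eq_square algebra_simps)
      finally have eq: "2 * coeff f 3 = 2 * ((1 + ?l + ?l^2) * c1^2 - (1 + ?l) * c2)" .
      then show ?thesis by (subst (asm) mult_cancel_left) simp
    qed
  qed
qed



lemma key_ineq:
  fixes x y l :: real
  assumes r: "x^2 + y^2 < 1" and l: "0 < l" "l \<le> 1"
  shows "l^2 * ((1 + x^2 + y^2)^2 - 4*x^2) < (1 + l - x)^2 + y^2"
proof -
  define rho where "rho = x^2 + y^2"
  define t where "t = 1 - 2*x + rho"
  define s where "s = 1 - rho"
  have t0: "0 \<le> t" unfolding t_def rho_def
    using sum_power2_ge_zero[of "1 - x" y] by (simp add: power2_eq_square power4_eq_xxxx algebra_simps)
  have s0: "0 < s" using r by (simp add: s_def rho_def)
  have e1: "(1 + l - x)^2 + y^2 = t * (1 + l) + l * s + l^2"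
    unfolding t_def s_def rho_def by (simp add: power2_eq_square power4_eq_xxxx algebra_simps)
  have e2: "l^2 * ((1 + x^2 + y^2)^2 - 4*x^2) = l^2 * t * (2 * (1 + rho) - t)"
    unfolding t_def rho_def by (simp add: power2_eq_square power4_eq_xxxx algebra_simps)
  define B where "B = 1 + l - 2 * l^2 * (1 + rho)"
  define G where "G = l^2 * t^2 + B * t + l * s + l^2"
  have eG: "(1 + l - x)^2 + y^2 - l^2 * ((1 + x^2 + y^2)^2 - 4*x^2) = G"
    unfolding e1 e2 G_def B_def by (simp add: power2_eq_square power4_eq_xxxx algebra_simps)
  have "0 < G"
  proof (cases "0 \<le> B")
    case True
    have "0 \<le> l^2 * t^2" by simp
    moreover have "0 \<le> B * t" using True t0 by simp
    moreover have "0 < l * s + l^2" using l s0 by (simp add: add_pos_pos)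
    ultimately show ?thesis unfolding G_def by linarith
  next
    case False
    then have B0: "B < 0" by simp
    define c where "c = 1 + l - 4 * l^2"
    have Bc: "B = c + 2 * l^2 * s" unfolding B_def c_def s_def by (simp add: algebra_simps)
    have c0: "c < 0"
    proof -
      have "0 < 2 * l^2 * s" using l s0 by simp
      then show ?thesis using B0 Bc by linarith
    qed
    have f1: "1 + l - 6 * l^2 < 0"
    proof -
      have "0 < 2 * l^2" using l by simp
      then show ?thesis using c0 unfolding c_def by linarith
    qed
    have f2: "0 \<le> 1 + l - 2 * l^2"
    proof -
      have "1 + l - 2 * l^2 = (1 - l) * (1 + 2 * l)" by (simp add: power2_eq_square power4_eq_xxxx algebra_simps)
      also have "0 \<le> \<dots>" using l by simp
      finally show ?thesis .
    qed
    have "c^2 - 4 * l^4 = (1 + l - 6 * l^2) * (1 + l - 2 * l^2)"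
      unfolding c_def by (simp add: power2_eq_square power4_eq_xxxx algebra_simps)
    also have "\<dots> \<le> 0" using f1 f2 by (simp add: mult_nonpos_nonneg)
    finally have d0: "c^2 - 4 * l^4 \<le> 0" .
    have g1: "c + l^2 * s - l < 0"
    proof -
      have "0 < l^2 * s" using l s0 by simp
      then show ?thesis using B0 Bc l by linarith
    qed
    have d1: "4 * l^2 * s * (c + l^2 * s - l) < 0"
      using g1 l s0 by (simp add: mult_pos_neg)
    have "B^2 - 4 * l^3 * s - 4 * l^4 = (c^2 - 4 * l^4) + 4 * l^2 * s * (c + l^2 * s - l)"
      unfolding Bc by (simp add: power2_eq_square power3_eq_cube power4_eq_xxxx algebra_simps)
    then have disc: "B^2 < 4 * l^3 * s + 4 * l^4" using d0 d1 by linarith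
    have "4 * l^2 * G = (2 * l^2 * t + B)^2 + (4 * l^3 * s + 4 * l^4 - B^2)"
      unfolding G_def by (simp add: power2_eq_square power3_eq_cube power4_eq_xxxx algebra_simps)
    moreover have "0 \<le> (2 * l^2 * t + B)^2" by simp
    ultimately have "0 < 4 * l^2 * G" using disc by linarith
    then show ?thesis using l by (simp add: zero_less_mult_iff)
  qed
  then show ?thesis using eG by linarith
qed



lemma core_no_unit:
  fixes e zeta :: complex and lam :: real
  assumes lam: "0 < lam" "lam \<le> 1" and e1: "cmod e = 1" and z1: "cmod zeta < 1"
    and eq: "of_real lam * e^2 + (1 + of_real lam) * e = zeta + of_real lam * zeta^2"
  shows False
proof -
  let ?l = "complex_of_real lam"
  have enz: "e \<noteq> 0" using e1 by auto
  define eta where "eta = zeta / e"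
  have zeta: "zeta = e * eta" using enz by (simp add: eta_def)
  have neta: "cmod eta = cmod zeta" using e1 by (simp add: eta_def norm_divide)
  have "e * (?l * e * (eta^2 - 1)) - e * (1 + ?l - eta) =
      (e * eta + ?l * (e * eta)^2) - (?l * e^2 + (1 + ?l) * e)"
    by (simp add: power2_eq_square algebra_simps)
  also have "\<dots> = 0" using eq unfolding zeta by simp
  finally have "e * (?l * e * (eta^2 - 1)) = e * (1 + ?l - eta)" by simp
  then have eq2: "?l * e * (eta^2 - 1) = 1 + ?l - eta" using enz by simp
  have "cmod (?l * e * (eta^2 - 1)) = lam * cmod (eta^2 - 1)"
    using e1 lam by (simp add: norm_mult)
  then have nq: "lam * cmod (eta^2 - 1) = cmod (1 + ?l - eta)" using eq2 by simp
  define x where "x = Re eta"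
  define y where "y = Im eta"
  have r: "x^2 + y^2 < 1"
  proof -
    have "(cmod eta)^2 < 1" using z1 neta by (simp add: power_less_one_iff abs_square_less_1)
    then show ?thesis by (simp add: cmod_power2 x_def y_def)
  qed
  have A: "(cmod (eta^2 - 1))^2 = (1 + x^2 + y^2)^2 - 4*x^2"
    unfolding cmod_power2 x_def y_def by (simp add: power2_eq_square algebra_simps)
  have Bq: "(cmod (1 + ?l - eta))^2 = (1 + lam - x)^2 + y^2"
    unfolding cmod_power2 x_def y_def by simp
  have "lam^2 * ((1 + x^2 + y^2)^2 - 4*x^2) = (1 + lam - x)^2 + y^2"
    using arg_cong[OF nq, of "\<lambda>t. t^2"] unfolding A[symmetric] Bq[symmetric]
    by (simp add: power_mult_distrib)
  moreover have "lam^2 * ((1 + x^2 + y^2)^2 - 4*x^2) < (1 + lam - x)^2 + y^2"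
    by (rule key_ineq[OF r lam])
  ultimately show False by simp
qed

lemma omega_ex:
  fixes lam :: real
  assumes lam: "0 < lam" "lam \<le> 1"
  shows "\<exists>w. w holomorphic_on ball 0 1 \<and> w ` ball 0 1 \<subseteq> ball 0 1 \<and> w 0 = 0 \<and>
     (\<forall>z \<in> ball 0 1. of_real lam * (w z)^2 + (1 + of_real lam) * w z = z + of_real lam * z^2)"
proof -
  let ?B = "ball (0::complex) 1"
  let ?l = "complex_of_real lam"
  define D where "D = (\<lambda>z. (1 + ?l)^2 + 4 * ?l * (z + ?l * z^2))"
  define w where "w = (\<lambda>z. (csqrt (D z) - (1 + ?l)) / (2 * ?l))"
  have lnz: "?l \<noteq> 0" using lam by simp
  have Dn: "D z \<notin> \<real>\<^sub>\<le>\<^sub>0" if "z \<in> ?B" for z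
  proof
    assume "D z \<in> \<real>\<^sub>\<le>\<^sub>0"
    then have re: "Re (D z) \<le> 0" and im: "Im (D z) = 0" by (auto simp: complex_nonpos_Reals_iff)
    define x where "x = Re z"
    define y where "y = Im z"
    have r: "x^2 + y^2 < 1"
    proof -
      have "(cmod z)^2 < 1" using that by (simp add: power_less_one_iff abs_square_less_1)
      then show ?thesis by (simp add: cmod_power2 x_def y_def)
    qed
    have ReD: "Re (D z) = (1 + 2*lam*x)^2 + lam^2 + 2*lam - 4*lam^2*y^2"
      by (simp add: D_def x_def y_def power2_eq_square algebra_simps)
    have ImD: "Im (D z) = 4 * lam * y * (1 + 2*lam*x)"
      by (simp add: D_def x_def y_def power2_eq_square algebra_simps)
    show False
    proof (cases "y = 0")
      case True
      have a1: "0 < lam^2 + 2*lam" using lam by (intro add_nonneg_pos) auto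
      have a2: "0 \<le> (1 + 2*lam*x)^2" by simp
      have a3: "Re (D z) = (1 + 2*lam*x)^2 + lam^2 + 2*lam" using ReD True by simp
      show False using a1 a2 a3 re by linarith
    next
      case False
      then have "1 + 2*lam*x = 0" using im ImD lam by simp
      then have h2: "2*lam*x = -1" by linarith
      have x: "4 * lam^2 * x^2 = 1"
      proof -
        have "4 * lam^2 * x^2 = (2*lam*x)^2" by (simp add: power_mult_distrib)
        also have "\<dots> = 1" using h2 by simp
        finally show ?thesis .
      qed
      have "lam^2 + 2*lam \<le> 4*lam^2*y^2" using re ReD \<open>1 + 2*lam*x = 0\<close> by simp
      moreover have "4*lam^2*(x^2 + y^2) < 4*lam^2" using r lam by simp
      moreover have "4*lam^2*(x^2+y^2) = 4*lam^2*x^2 + 4*lam^2*y^2" by (simp add: algebra_simps)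
      ultimately have "1 + lam^2 + 2*lam < 4*lam^2" using x by linarith
      moreover have "(1+lam)^2 = 1 + lam^2 + 2*lam" by (simp add: power2_eq_square algebra_simps)
      moreover have "(2*lam)^2 = 4*lam^2" by simp
      ultimately have "(1 + lam)^2 < (2*lam)^2" by simp
      then have "1 + lam < 2 * lam" using power_less_imp_less_base[of "1+lam" 2 "2*lam"] lam by simp
      then show False using lam by simp
    qed
  qed
  have holD: "D holomorphic_on ?B" unfolding D_def by (intro holomorphic_intros)
  have holw: "w holomorphic_on ?B" unfolding w_def
    by (intro holomorphic_intros holomorphic_on_csqrt' holD) (use Dn lnz in auto)
  have w0: "w 0 = 0"
  proof -
    have "D 0 = of_real ((1 + lam)^2)" by (simp add: D_def)
    then have "csqrt (D 0) = of_real (1 + lam)" using lam by simp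
    then show ?thesis by (simp add: w_def)
  qed
  have weq: "?l * (w z)^2 + (1 + ?l) * w z = z + ?l * z^2" for z
  proof -
    have S: "(csqrt (D z))^2 = D z" by simp
    have "?l * (w z)^2 + (1 + ?l) * w z = ((csqrt (D z))^2 - (1 + ?l)^2) / (4 * ?l)"
      unfolding w_def using lnz by (simp add: field_simps power2_eq_square)
    also have "\<dots> = z + ?l * z^2" unfolding S D_def using lnz by (simp add: field_simps)
    finally show ?thesis .
  qed
  have contw: "continuous_on ?B w" by (rule holomorphic_on_imp_continuous_on[OF holw])
  have wB: "w z \<in> ?B" if zB: "z \<in> ?B" for z
  proof (rule ccontr)
    assume "w z \<notin> ?B"
    then have ge: "1 \<le> cmod (w z)" by simp
    have segB: "of_real t * z \<in> ?B" if "0 \<le> t" "t \<le> 1" for t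
    proof -
      have "cmod (of_real t * z) = t * cmod z" using that by (simp add: norm_mult)
      also have "\<dots> \<le> cmod z" using that by (simp add: mult_left_le_one_le)
      finally show ?thesis using zB by simp
    qed
    have cont: "continuous_on {0..1} (\<lambda>t. cmod (w (of_real t * z)))"
      by (intro continuous_intros continuous_on_compose2[OF contw]) (use segB in auto)
    obtain t where t: "0 \<le> t" "t \<le> 1" "cmod (w (of_real t * z)) = 1"
      using IVT'[of "\<lambda>t. cmod (w (of_real t * z))" 0 1 1] cont ge w0 by auto
    show False
      by (rule core_no_unit[OF lam t(3), of "of_real t * z"])
         (use segB[OF t(1,2)] weq in auto)
  qed
  show ?thesis
    by (rule exI[of _ w]) (use holw wB w0 weq in auto)
qed



lemma hnz_lemma:
  fixes lam :: real and z :: complex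
  assumes lam: "0 < lam" "lam \<le> 1" and z: "z \<in> ball 0 1"
  shows "(1 + z) * (1 + of_real lam * z) \<noteq> 0"
proof -
  have "cmod z < 1" using z by simp
  then have "1 + z \<noteq> 0" by (metis add.inverse_unique norm_minus_cancel norm_one not_less_iff_gr_or_eq)
  moreover have "1 + of_real lam * z \<noteq> 0"
  proof
    assume "1 + of_real lam * z = 0"
    then have "cmod (of_real lam * z) = 1" by (metis add.inverse_unique norm_minus_cancel norm_one)
    moreover have "cmod (of_real lam * z) < 1"
    proof -
      have "lam * cmod z < 1 * 1"
        by (rule mult_le_less_imp_less) (use \<open>cmod z < 1\<close> lam in auto)
      then show ?thesis using lam by (simp add: norm_mult)
    qed
    ultimately show False by simp
  qed
  ultimately show ?thesis by simp
qed

lemma quad_example: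
  fixes a :: complex and lam :: real
  assumes lam: "0 < lam" "lam \<le> 1"
    and pnz: "\<And>z. z \<in> ball 0 1 \<Longrightarrow> 1 + a * z + of_real lam * z^2 \<noteq> 0"
  shows "(\<lambda>z. z / (1 + a * z + of_real lam * z^2)) \<in> classU lam"
    "coeff (\<lambda>z. z / (1 + a * z + of_real lam * z^2)) 2 = - a"
    "coeff (\<lambda>z. z / (1 + a * z + of_real lam * z^2)) 3 = a^2 - of_real lam"
    "(\<lambda>z. if z = 0 then 1 else (\<lambda>z. z / (1 + a * z + of_real lam * z^2)) z / z)
       = (\<lambda>z. 1 / (1 + a * z + of_real lam * z^2))"
proof -
  let ?B = "ball (0::complex) 1"
  let ?l = "complex_of_real lam"
  define p where "p = (\<lambda>z. 1 + a * z + ?l * z^2)"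
  define f where "f = (\<lambda>z. z / p z)"
  define G where "G = (\<lambda>z. 1 / p z)"
  have pnz': "p z \<noteq> 0" if "z \<in> ?B" for z using pnz[OF that] by (simp add: p_def)
  have holG: "G holomorphic_on ?B" unfolding G_def p_def
    by (intro holomorphic_intros) (use pnz in auto)
  have fG: "f = (\<lambda>z. z * G z)" by (simp add: f_def G_def fun_eq_iff)
  have G0: "G 0 = 1" by (simp add: G_def p_def)
  have dG: "deriv G 0 = - a" "deriv (deriv G) 0 = 2 * (a^2 - ?l)"
    unfolding G_def p_def by (rule deriv_inv_quad)+
  have c2: "coeff f 2 = - a"
    using coeff_zmult[OF holG, of 1] fG dG by (simp add: numeral_2_eq_2)
  have "coeff f 3 = deriv (deriv G) 0 / 2"
    using coeff_zmult[OF holG, of 2] fG by (simp add: numeral_3_eq_3 numeral_2_eq_2)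
  moreover have "deriv (deriv G) 0 / 2 = a^2 - ?l" unfolding dG(2)
    by (rule nonzero_mult_div_cancel_left) simp
  ultimately have c3: "coeff f 3 = a^2 - ?l" by (simp only:)
  have holf: "f holomorphic_on ?B" unfolding fG by (intro holomorphic_intros holG)
  have f0: "f 0 = 0" by (simp add: f_def)
  have df0: "deriv f 0 = 1"
  proof -
    have "(G has_field_derivative deriv G 0) (at 0)"
      by (rule holomorphic_derivI[OF holG]) auto
    then have "(f has_field_derivative 1 * G 0 + 0 * deriv G 0) (at 0)"
      unfolding fG by (auto intro!: derivative_eq_intros)
    then show ?thesis using G0 by (simp add: DERIV_imp_deriv)
  qed
  have fU: "f \<in> classU lam"
    unfolding classU_def classA_def
  proof (intro CollectI conjI ballI)
    show "f holomorphic_on ?B" by (rule holf)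
    show "f 0 = 0" by (rule f0)
    show "deriv f 0 = 1" by (rule df0)
    fix z assume zB: "z \<in> ?B - {0}"
    then have zB': "z \<in> ?B" and z0: "z \<noteq> 0" by auto
    have pz: "p z \<noteq> 0" by (rule pnz'[OF zB'])
    have "(f has_field_derivative (p z - z * (a + 2 * ?l * z)) / (p z)^2) (at z)"
      unfolding f_def p_def using pz
      by (auto intro!: derivative_eq_intros simp: p_def field_simps power2_eq_square)
    then have df: "deriv f z = (p z - z * (a + 2 * ?l * z)) / (p z)^2" by (rule DERIV_imp_deriv)
    have q: "z / f z = p z" using pz z0 by (simp add: f_def)
    have "(z / f z)^2 * deriv f z = p z - z * (a + 2 * ?l * z)"
      unfolding q df using pz by simp
    then have "(z / f z)^2 * deriv f z - 1 = - ?l * z^2"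
      by (simp add: p_def algebra_simps power2_eq_square)
    then have "cmod ((z / f z)^2 * deriv f z - 1) = lam * (cmod z)^2"
      using lam by (simp add: norm_mult norm_power)
    also have "\<dots> < lam"
    proof -
      have "(cmod z)^2 < 1" using zB' by (simp add: power_less_one_iff abs_square_less_1)
      then show ?thesis using lam by simp
    qed
    finally show "cmod ((z / f z)^2 * deriv f z - 1) < lam" .
  qed
  show "(\<lambda>z. z / (1 + a * z + of_real lam * z^2)) \<in> classU lam" using fU by (simp add: f_def p_def)
  show "coeff (\<lambda>z. z / (1 + a * z + of_real lam * z^2)) 2 = - a" using c2 by (simp add: f_def p_def)
  show "coeff (\<lambda>z. z / (1 + a * z + of_real lam * z^2)) 3 = a^2 - of_real lam" using c3 by (simp add: f_def p_def)
  show "(\<lambda>z. if z = 0 then 1 else (\<lambda>z. z / (1 + a * z + of_real lam * z^2)) z / z)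
       = (\<lambda>z. 1 / (1 + a * z + of_real lam * z^2))"
    by (auto simp: fun_eq_iff)
qed



lemma classUs_sub: "classUs lam \<subseteq> classU lam" by (auto simp: classUs_def)

lemma ex_id:
  assumes lam: "0 < lam" "lam \<le> 1"
  shows "(\<lambda>z::complex. z) \<in> classUs lam" "detT21 (\<lambda>z. z) = 1" "detT31 (\<lambda>z. z) = 1"
proof -
  have c2: "coeff (\<lambda>z::complex. z) 2 = 0" and c3: "coeff (\<lambda>z::complex. z) 3 = 0"
    by (simp_all add: coeff_def)
  show "detT21 (\<lambda>z. z) = 1" "detT31 (\<lambda>z. z) = 1"
    by (simp_all add: detT21_def detT31_def c2 c3)
  have d: "deriv (\<lambda>z::complex. z) z = 1" for z by (rule DERIV_imp_deriv) (rule DERIV_ident)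
  have U: "(\<lambda>z::complex. z) \<in> classU lam"
    unfolding classU_def classA_def using lam by (auto simp: d)
  have S: "subordinate (\<lambda>z. if z = 0 then 1 else z / z)
                  (\<lambda>z. 1 / ((1 + z) * (1 + complex_of_real lam * z)))"
    unfolding subordinate_def by (rule exI[of _ "\<lambda>z. 0"]) auto
  show "(\<lambda>z::complex. z) \<in> classUs lam" using U S by (simp add: classUs_def)
qed

lemma norm_1_plus_lam: "0 \<le> lam \<Longrightarrow> cmod (1 + complex_of_real lam) = 1 + lam"
  by (metis abs_of_nonneg add_nonneg_nonneg norm_of_real of_real_1 of_real_add zero_le_one)

lemma ex_plus:
  assumes lam: "0 < lam" "lam \<le> 1"
  defines "f \<equiv> (\<lambda>z. z / (1 + (1 + complex_of_real lam) * z + complex_of_real lam * z^2))"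
  shows "f \<in> classUs lam" "detT21 f = - lam * (2 + lam)" "detT31 f = lam^2 * (1 + lam) * (3 + lam)"
proof -
  let ?l = "complex_of_real lam"
  have fact: "1 + (1 + ?l) * z + ?l * z^2 = (1 + z) * (1 + ?l * z)" for z
    by (simp add: power2_eq_square algebra_simps)
  have pnz: "1 + (1 + ?l) * z + ?l * z^2 \<noteq> 0" if "z \<in> ball 0 1" for z
    unfolding fact by (rule hnz_lemma[OF lam that])
  note Q0 = quad_example[OF lam pnz]
  have Q1: "f \<in> classU lam" using Q0(1) by (simp add: f_def)
  have Q2: "coeff f 2 = - (1 + ?l)" using Q0(2) by (simp add: f_def)
  have Q3: "coeff f 3 = (1 + ?l)^2 - ?l" using Q0(3) by (simp add: f_def)
  have Fq: "(\<lambda>z. if z = 0 then 1 else f z / z) = (\<lambda>z. 1 / ((1 + z) * (1 + complex_of_real lam * z)))"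
    by (auto simp: f_def fun_eq_iff fact)
  have S: "subordinate (\<lambda>z. if z = 0 then 1 else f z / z)
                  (\<lambda>z. 1 / ((1 + z) * (1 + complex_of_real lam * z)))"
    unfolding subordinate_def Fq
    by (rule exI[of _ "\<lambda>z. z"]) auto
  show "f \<in> classUs lam" using Q1 S by (simp add: classUs_def)
  have n: "cmod (1 + ?l) = 1 + lam" using lam by (simp add: norm_1_plus_lam)
  show "detT21 f = - lam * (2 + lam)"
    unfolding detT21_def Q2 norm_minus_cancel n by (simp add: power2_eq_square algebra_simps)
  have "detT31 f = (1 - (cmod (coeff f 2))^2)^2 - (cmod (coeff f 3 - (coeff f 2)^2))^2"
    unfolding detT31_def by (rule detT31_alt)
  also have "coeff f 3 - (coeff f 2)^2 = - ?l" unfolding Q2 Q3 by (simp add: power2_eq_square algebra_simps)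
  also have "cmod (coeff f 2) = 1 + lam" unfolding Q2 norm_minus_cancel n ..
  finally show "detT31 f = lam^2 * (1 + lam) * (3 + lam)"
    using lam by (simp add: power2_eq_square algebra_simps)
qed

lemma ex_one:
  assumes lam: "0 < lam" "lam \<le> 1"
  defines "f \<equiv> (\<lambda>z. z / (1 + 1 * z + complex_of_real lam * z^2))"
  shows "f \<in> classUs lam" "detT31 f = - (lam^2)"
proof -
  let ?l = "complex_of_real lam"
  obtain w where holw: "w holomorphic_on ball 0 1" and wB: "w ` ball 0 1 \<subseteq> ball 0 1" and w0: "w 0 = 0"
    and weq: "\<forall>z \<in> ball 0 1. ?l * (w z)^2 + (1 + ?l) * w z = z + ?l * z^2"
    using omega_ex[OF lam] by blast
  have wzB: "w z \<in> ball 0 1" if "z \<in> ball 0 1" for z using wB that by (auto simp: image_subset_iff)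
  have fact: "1 + 1 * z + ?l * z^2 = (1 + w z) * (1 + ?l * w z)" if "z \<in> ball 0 1" for z
  proof -
    have "(1 + w z) * (1 + ?l * w z) = 1 + (?l * (w z)^2 + (1 + ?l) * w z)"
      by (simp add: power2_eq_square algebra_simps)
    also have "\<dots> = 1 + 1 * z + ?l * z^2" using weq that by simp
    finally show ?thesis by simp
  qed
  have pnz: "1 + 1 * z + ?l * z^2 \<noteq> 0" if "z \<in> ball 0 1" for z
    unfolding fact[OF that] by (rule hnz_lemma[OF lam wzB[OF that]])
  note Q0 = quad_example[OF lam pnz]
  have Q1: "f \<in> classU lam" using Q0(1) by (simp add: f_def)
  have Q2: "coeff f 2 = - 1" using Q0(2) by (simp add: f_def)
  have Q3: "coeff f 3 = 1 - ?l" using Q0(3) by (simp add: f_def)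
  have Fq: "(\<lambda>z. if z = 0 then 1 else f z / z) z = 1 / ((1 + w z) * (1 + complex_of_real lam * w z))"
    if "z \<in> ball 0 1" for z
    using fact[OF that] w0 by (auto simp: f_def)
  have S: "subordinate (\<lambda>z. if z = 0 then 1 else f z / z)
                  (\<lambda>z. 1 / ((1 + z) * (1 + complex_of_real lam * z)))"
    unfolding subordinate_def
    by (rule exI[of _ w]) (use holw wB w0 Fq in auto)
  show "f \<in> classUs lam" using Q1 S by (simp add: classUs_def)
  have "detT31 f = (1 - (cmod (coeff f 2))^2)^2 - (cmod (coeff f 3 - (coeff f 2)^2))^2"
    unfolding detT31_def by (rule detT31_alt)
  also have "coeff f 3 - (coeff f 2)^2 = - ?l" unfolding Q2 Q3 by simp
  also have "cmod (coeff f 2) = 1" unfolding Q2 by simp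
  finally show "detT31 f = - (lam^2)" using lam by simp
qed

theorem theorem2:
  fixes lam :: real
  assumes "0 < lam" and "lam \<le> 1"
  shows "(\<forall>f \<in> classU lam. - lam * (2 + lam) \<le> detT21 f \<and> detT21 f \<le> 1)
       \<and> (\<forall>f \<in> classUs lam. - (lam^2) \<le> detT31 f \<and>
            detT31 f \<le> (if lam \<le> lambda0 then 1 else lam^2 * (1 + lam) * (3 + lam)))
       \<and> (\<exists>f \<in> classU lam. detT21 f = - lam * (2 + lam))
       \<and> (\<exists>f \<in> classU lam. detT21 f = 1)
       \<and> (\<exists>f \<in> classUs lam. detT31 f = - (lam^2))
       \<and> (\<exists>f \<in> classUs lam. detT31 f =
            (if lam \<le> lambda0 then 1 else lam^2 * (1 + lam) * (3 + lam)))"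
proof -
  have lam: "0 < lam" "lam \<le> 1" using assms by auto
  let ?l = "complex_of_real lam"
  have P1: "\<forall>f \<in> classU lam. - lam * (2 + lam) \<le> detT21 f \<and> detT21 f \<le> 1"
  proof
    fix f assume f: "f \<in> classU lam"
    have a: "cmod (coeff f 2) \<le> 1 + lam" by (rule classU_facts(2)[OF f lam])
    have b: "(cmod (coeff f 2))^2 \<le> (1 + lam)^2" using a by (intro power_mono) auto
    have c: "(1 + lam)^2 = 1 + lam * (2 + lam)" by (simp add: power2_eq_square algebra_simps)
    have d: "0 \<le> (cmod (coeff f 2))^2" by simp
    show "- lam * (2 + lam) \<le> detT21 f \<and> detT21 f \<le> 1"
      unfolding detT21_def using b c d by linarith
  qed
  have P2: "\<forall>f \<in> classUs lam. - (lam^2) \<le> detT31 f \<and>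
            detT31 f \<le> (if lam \<le> lambda0 then 1 else lam^2 * (1 + lam) * (3 + lam))"
  proof
    fix f assume f: "f \<in> classUs lam"
    have fU: "f \<in> classU lam" using f by (simp add: classUs_def)
    define A2 where "A2 = coeff f 2"
    define A3 where "A3 = coeff f 3"
    define m where "m = cmod (A3 - A2^2)"
    have d: "detT31 f = (1 - (cmod A2)^2)^2 - m^2"
      unfolding detT31_def A2_def A3_def m_def by (rule detT31_alt)
    have e: "m \<le> lam" using classU_facts(1)[OF fU lam] by (simp add: m_def A2_def A3_def)
    have m0: "0 \<le> m" by (simp add: m_def)
    have "m^2 \<le> lam^2" using e m0 by (intro power_mono) auto
    moreover have "0 \<le> (1 - (cmod A2)^2)^2" by simp
    ultimately have low: "- (lam^2) \<le> detT31 f" unfolding d by linarith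
    obtain c1 c2 where c1: "cmod c1 \<le> 1" and c2: "cmod c2 \<le> 1 - (cmod c1)^2"
      and A2e: "A2 = - (1 + ?l) * c1" and A3e: "A3 = (1 + ?l + ?l^2) * c1^2 - (1 + ?l) * c2"
      using classUs_coeffs[OF f lam] unfolding A2_def A3_def by blast
    define s where "s = (cmod c1)^2"
    have s0: "0 \<le> s" and s1: "s \<le> 1" using c1 by (auto simp: s_def power_le_one)
    have n: "cmod (1 + ?l) = 1 + lam" using lam by (simp add: norm_1_plus_lam)
    have "cmod A2 = (1 + lam) * cmod c1"
      unfolding A2e norm_mult norm_minus_cancel n ..
    then have nA2: "(cmod A2)^2 = (1 + lam)^2 * s"
      unfolding s_def by (simp add: power_mult_distrib)
    have eq: "A3 - A2^2 = - (?l * c1^2 + (1 + ?l) * c2)"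
      unfolding A2e A3e by (simp add: power2_eq_square algebra_simps)
    have "cmod (?l * c1^2) - cmod ((1 + ?l) * c2) \<le> cmod (?l * c1^2 + (1 + ?l) * c2)"
      using norm_triangle_ineq2[of "?l * c1^2" "- ((1 + ?l) * c2)"] by simp
    moreover have "cmod (?l * c1^2) = lam * s" using lam by (simp add: norm_mult norm_power s_def)
    moreover have "cmod ((1 + ?l) * c2) \<le> (1 + lam) * (1 - s)"
      unfolding norm_mult n s_def using c2 lam by (intro mult_left_mono) auto
    ultimately have "lam * s - (1 + lam) * (1 - s) \<le> m"
      unfolding m_def eq norm_minus_cancel by linarith
    then have mb: "(1 + 2*lam) * s - (1 + lam) \<le> m" by (simp add: algebra_simps)
    have up: "detT31 f \<le> max 1 (P0 lam)"
      unfolding d nA2 by (rule upper_real[OF lam s0 s1 m0 mb])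
    have "detT31 f \<le> (if lam \<le> lambda0 then 1 else lam^2 * (1 + lam) * (3 + lam))"
    proof (cases "lam \<le> lambda0")
      case True
      then have "P0 lam \<le> 1" using le_lambda0_iff[OF lam(1)] by simp
      then show ?thesis using True up by simp
    next
      case False
      then have "\<not> P0 lam \<le> 1" using le_lambda0_iff[OF lam(1)] by simp
      then show ?thesis using False up by (simp add: P0_def)
    qed
    then show "- (lam^2) \<le> detT31 f \<and>
            detT31 f \<le> (if lam \<le> lambda0 then 1 else lam^2 * (1 + lam) * (3 + lam))"
      using low by simp
  qed
  note EP = ex_plus[OF lam]
  note EI = ex_id[OF lam]
  note EO = ex_one[OF lam]
  have P3: "\<exists>f \<in> classU lam. detT21 f = - lam * (2 + lam)"
    using EP(1,2) classUs_sub by blast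
  have P4: "\<exists>f \<in> classU lam. detT21 f = 1"
    using EI(1,2) classUs_sub by blast
  have P5: "\<exists>f \<in> classUs lam. detT31 f = - (lam^2)"
    using EO by blast
  have P6: "\<exists>f \<in> classUs lam. detT31 f =
            (if lam \<le> lambda0 then 1 else lam^2 * (1 + lam) * (3 + lam))"
  proof (cases "lam \<le> lambda0")
    case True then show ?thesis using EI(1,3) by auto
  next
    case False then show ?thesis using EP(1,3) by auto
  qed
  show ?thesis using P1 P2 P3 P4 P5 P6 by blast
qed

end
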